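(* Let $\epsilon\in(0,3/4]$, let $\mathcal{Y}=\sum_{k=1}^r\alpha_k\bigcirc_{\ell=1}^d\mathbf{y}^{(\ell)}_k\in\mathbb{C}^{n_1\times\cdots\times n_d}$ be a rank-$r$ tensor in standard form, and for each $j\in[d]$ let $\mathbf{A}_j\in\mathbb{C}^{m_j\times n_j}$ be an $(\epsilon/4d)$-JL embedding into $\mathbb{C}^{m_j}$ of the $2r^2-r$ vectors $$\mathcal{S}'_j:=\Big(\bigcup_{1\le h<k\le r}\{\mathbf{y}^{(j)}_k-\mathbf{y}^{(j)}_h,\ \mathbf{y}^{(j)}_k+\mathbf{y}^{(j)}_h,\ \mathbf{y}^{(j)}_k-\mathrm{i}\,\mathbf{y}^{(j)}_h,\ \mathbf{y}^{(j)}_k+\mathrm{i}\,\mathbf{y}^{(j)}_h\}\Big)\cup\{\mathbf{y}^{(j)}_k\}_{k\in[r]}\subset\mathbb{C}^{n_j}.$$ Then $$\big|\|\mathcal{Y}\|^2-\|\mathcal{Y}\times_1\mathbf{A}_1\cdots\times_d\mathbf{A}_d\|^2\big|\le\epsilon\Big(e+e^2\sqrt{r(r-1)}\max\big(\epsilon^{d-1},\mu_{\mathcal{Y}}^{d-1}\big)\Big)\|\boldsymbol\alpha\|_2^2\le\epsilon e^2(r+1)\|\boldsymbol\alpha\|_2^2 .$$ Furthermore, if $\mu_{\mathcal{Y}}=0$ then $$\big|\|\mathcal{Y}\|^2-\|\mathcal{Y}\times_1\mathbf{A}_1\cdots\times_d\mathbf{A}_d\|^2\big|\le\big(\epsilon+e\sqrt{r(r-1)}\,\epsilon^d\big)e\,\|\boldsymbol\alpha\|_2^2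 .$$
   Context: Tensors in $\mathbb{C}^{n_1\times\cdots\times n_d}$ have inner product $\langle\mathcal{X},\mathcal{Y}\rangle=\sum\mathcal{X}_{i_1\dots i_d}\overline{\mathcal{Y}_{i_1\dots i_d}}$ and norm $\|\cdot\|$; $\bigcirc$ is the outer product; the $j$-mode product is $(\mathcal{X}\times_j\mathbf{U})_{i_1,\dots,\ell,\dots,i_d}=\sum_{i_j}\mathcal{X}_{i_1,\dots,i_j,\dots,i_d}\mathbf{U}_{\ell,i_j}$; $\mathrm{i}$ is the imaginary unit and $e$ Euler's number. A matrix $\mathbf{A}$ is an $\epsilon$-JL embedding of a set $S$ if $\|\mathbf{A}x\|_2^2=(1+\epsilon_x)\|x\|_2^2$ with $\epsilon_x\in(-\epsilon,\epsilon)$ for all $x\in S$. Standard form: $\|\mathbf{y}^{(\ell)}_k\|_2=1$ for all $\ell,k$; $\boldsymbol\alpha=(\alpha_k)_{k\in[r]}$. The maximum modewise coherence (relative to this representation) is $\mu_{\mathcal{Y}}=\max_{\ell\in[d]}\max_{k\ne h}|\langle\mathbf{y}^{(\ell)}_k,\mathbf{y}^{(\ell)}_h\rangle|$. *)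

theory Defs
  imports Complex_Main "HOL-Library.FuncSet"
begin

text \<open>Vectors in C^n are functions nat => complex, only entries i < n matter.
  Matrices in C^(m x n) are functions nat => nat => complex (row, column).
  Tensors in C^(n_1 x ... x n_d) are functions from multi-indices (nat => nat)
  to complex; the valid multi-indices are PiE {..<d} (%l. {..<n l}).\<close>

definition vinner :: "nat \<Rightarrow> (nat \<Rightarrow> complex) \<Rightarrow> (nat \<Rightarrow> complex) \<Rightarrow> complex" where
  "vinner n x y = (\<Sum>i<n. x i * cnj (y i))"

definition vnorm2 :: "nat \<Rightarrow> (nat \<Rightarrow> complex) \<Rightarrow> real" where
  "vnorm2 n x = (\<Sum>i<n. (cmod (x i))\<^sup>2)"

definition matvec :: "nat \<Rightarrow> (nat \<Rightarrow> nat \<Rightarrow> complex) \<Rightarrow> (nat \<Rightarrow> complex) \<Rightarrow> (nat \<Rightarrow> complex)" where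
  "matvec n A x = (\<lambda>l. \<Sum>i<n. A l i * x i)"

definition JL_embedding ::
  "real \<Rightarrow> nat \<Rightarrow> nat \<Rightarrow> (nat \<Rightarrow> nat \<Rightarrow> complex) \<Rightarrow> (nat \<Rightarrow> complex) set \<Rightarrow> bool" where
  "JL_embedding eps m n A S \<longleftrightarrow>
     (\<forall>x\<in>S. \<exists>ex. -eps < ex \<and> ex < eps \<and> vnorm2 m (matvec n A x) = (1 + ex) * vnorm2 n x)"

definition tindices :: "nat \<Rightarrow> (nat \<Rightarrow> nat) \<Rightarrow> (nat \<Rightarrow> nat) set" where
  "tindices d n = PiE {..<d} (\<lambda>l. {..<n l})"

definition tnorm2 :: "nat \<Rightarrow> (nat \<Rightarrow> nat) \<Rightarrow> ((nat \<Rightarrow> nat) \<Rightarrow> complex) \<Rightarrow> real" where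
  "tnorm2 d n X = (\<Sum>i\<in>tindices d n. (cmod (X i))\<^sup>2)"

definition mode_prod ::
  "((nat \<Rightarrow> nat) \<Rightarrow> complex) \<Rightarrow> nat \<Rightarrow> nat \<Rightarrow> (nat \<Rightarrow> nat \<Rightarrow> complex) \<Rightarrow> ((nat \<Rightarrow> nat) \<Rightarrow> complex)" where
  "mode_prod X j nj U = (\<lambda>i. \<Sum>t<nj. X (i(j := t)) * U (i j) t)"

text \<open>multi_mode_prod j n A X = X x_1 A_1 ... x_j A_j (modes indexed from 0).\<close>
fun multi_mode_prod ::
  "nat \<Rightarrow> (nat \<Rightarrow> nat) \<Rightarrow> (nat \<Rightarrow> nat \<Rightarrow> nat \<Rightarrow> complex) \<Rightarrow> ((nat \<Rightarrow> nat) \<Rightarrow> complex) \<Rightarrow> ((nat \<Rightarrow> nat) \<Rightarrow> complex)" where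
  "multi_mode_prod 0 n A X = X"
| "multi_mode_prod (Suc j) n A X = mode_prod (multi_mode_prod j n A X) j (n j) (A j)"

definition cp_tensor ::
  "nat \<Rightarrow> nat \<Rightarrow> (nat \<Rightarrow> complex) \<Rightarrow> (nat \<Rightarrow> nat \<Rightarrow> nat \<Rightarrow> complex) \<Rightarrow> ((nat \<Rightarrow> nat) \<Rightarrow> complex)" where
  "cp_tensor d r \<alpha> y = (\<lambda>i. \<Sum>k<r. \<alpha> k * (\<Prod>l<d. y l k (i l)))"

text \<open>Maximum modewise coherence (0 if there is no pair k ~= h).\<close>
definition coherence :: "nat \<Rightarrow> (nat \<Rightarrow> nat) \<Rightarrow> nat \<Rightarrow> (nat \<Rightarrow> nat \<Rightarrow> nat \<Rightarrow> complex) \<Rightarrow> real" where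
  "coherence d n r y = Max (insert 0
     {cmod (vinner (n l) (y l k) (y l h)) | l k h. l < d \<and> k < r \<and> h < r \<and> k \<noteq> h})"

definition S_prime :: "nat \<Rightarrow> (nat \<Rightarrow> nat \<Rightarrow> nat \<Rightarrow> complex) \<Rightarrow> nat \<Rightarrow> (nat \<Rightarrow> complex) set" where
  "S_prime r y j =
     (\<Union>k<r. \<Union>h<k. {\<lambda>i. y j k i - y j h i, \<lambda>i. y j k i + y j h i,
                     \<lambda>i. y j k i - \<i> * y j h i, \<lambda>i. y j k i + \<i> * y j h i})
     \<union> {y j k | k. k < r}"

end

theory Submission
  imports Defs "HOL-Library.FuncSet"
begin


lemma tnorm2_cp:
  "complex_of_real (tnorm2 d N (cp_tensor d r \<alpha> f)) =
   (\<Sum>k<r. \<Sum>h<r. \<alpha> k * cnj (\<alpha> h) * (\<Prod>l<d. vinner (N l) (f l k) (f l h)))"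
proof -
  have "complex_of_real (tnorm2 d N (cp_tensor d r \<alpha> f)) =
     (\<Sum>i\<in>tindices d N. (\<Sum>k<r. \<alpha> k * (\<Prod>l<d. f l k (i l))) * cnj (\<Sum>h<r. \<alpha> h * (\<Prod>l<d. f l h (i l))))"
    unfolding tnorm2_def cp_tensor_def of_real_sum complex_norm_square by simp
  also have "\<dots> = (\<Sum>i\<in>tindices d N. \<Sum>k<r. \<Sum>h<r. \<alpha> k * cnj (\<alpha> h) * (\<Prod>l<d. f l k (i l) * cnj (f l h (i l))))"
    apply (simp add: sum_distrib_left sum_distrib_right prod.distrib cnj_sum cnj_prod mult_ac)
    apply (rule sum.cong, simp)
    apply (subst sum.swap, simp)
    done
  also have "\<dots> = (\<Sum>k<r. \<Sum>h<r. \<alpha> k * cnj (\<alpha> h) * (\<Sum>i\<in>tindices d N. \<Prod>l<d. f l k (i l) * cnj (f l h (i l))))"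
    by (simp add: sum_distrib_left sum.swap[of _ "tindices d N"])
  also have "\<dots> = (\<Sum>k<r. \<Sum>h<r. \<alpha> k * cnj (\<alpha> h) * (\<Prod>l<d. vinner (N l) (f l k) (f l h)))"
    unfolding tindices_def vinner_def
    by (simp add: prod_sum_PiE)
  finally show ?thesis .
qed




lemma mmp:
  "j \<le> d \<Longrightarrow> multi_mode_prod j n A (cp_tensor d r \<alpha> y) =
     cp_tensor d r \<alpha> (\<lambda>l k. if l < j then matvec (n l) (A l) (y l k) else y l k)"
proof (induction j)
  case 0
  then show ?case by simp
next
  case (Suc j)
  then have jd: "j < d" by simp
  define z where "z = (\<lambda>l k. if l < j then matvec (n l) (A l) (y l k) else y l k)"
  define z' where "z' = (\<lambda>l k. if l < Suc j then matvec (n l) (A l) (y l k) else y l k)"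
  have D: "{..<d} = insert j ({..<d} - {j})" using jd by auto
  have P: "(\<Prod>l<d. g l) = g j * (\<Prod>l\<in>{..<d} - {j}. g l)" for g :: "nat \<Rightarrow> complex"
    using jd by (simp add: prod.remove)
  show ?case
  proof
    fix i
    have "multi_mode_prod (Suc j) n A (cp_tensor d r \<alpha> y) i =
       (\<Sum>t<n j. (\<Sum>k<r. \<alpha> k * (\<Prod>l<d. z l k ((i(j := t)) l))) * A j (i j) t)"
      using Suc by (simp add: mode_prod_def cp_tensor_def z_def)
    also have "\<dots> = (\<Sum>t<n j. \<Sum>k<r. \<alpha> k * (\<Prod>l\<in>{..<d} - {j}. z l k (i l)) * (y j k t * A j (i j) t))"
    proof (rule sum.cong[OF refl])
      fix t
      have R: "(\<Prod>l<d. z l k ((i(j := t)) l)) = y j k t * (\<Prod>l\<in>{..<d} - {j}. z l k (i l))" for k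
      proof -
        have "z j k = y j k" by (simp add: z_def)
        moreover have "(\<Prod>l\<in>{..<d} - {j}. z l k ((i(j := t)) l)) = (\<Prod>l\<in>{..<d} - {j}. z l k (i l))"
          by (rule prod.cong) auto
        ultimately show ?thesis unfolding P[of "\<lambda>l. z l k ((i(j := t)) l)"] by simp
      qed
      show "(\<Sum>k<r. \<alpha> k * (\<Prod>l<d. z l k ((i(j := t)) l))) * A j (i j) t =
         (\<Sum>k<r. \<alpha> k * (\<Prod>l\<in>{..<d} - {j}. z l k (i l)) * (y j k t * A j (i j) t))"
        unfolding R by (simp add: sum_distrib_right sum_distrib_left mult_ac)
    qed
    also have "\<dots> = (\<Sum>k<r. \<alpha> k * (\<Prod>l\<in>{..<d} - {j}. z l k (i l)) * (\<Sum>t<n j. y j k t * A j (i j) t))"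
      by (subst sum.swap) (simp add: sum_distrib_left)
    also have "\<dots> = (\<Sum>k<r. \<alpha> k * (\<Prod>l<d. z' l k (i l)))"
    proof (rule sum.cong[OF refl])
      fix k
      have "z' j k = matvec (n j) (A j) (y j k)" by (simp add: z'_def)
      moreover have "(\<Prod>l\<in>{..<d} - {j}. z' l k (i l)) = (\<Prod>l\<in>{..<d} - {j}. z l k (i l))"
        by (rule prod.cong) (auto simp: z_def z'_def)
      ultimately show "\<alpha> k * (\<Prod>l\<in>{..<d} - {j}. z l k (i l)) * (\<Sum>t<n j. y j k t * A j (i j) t) =
          \<alpha> k * (\<Prod>l<d. z' l k (i l))"
        unfolding P[of "\<lambda>l. z' l k (i l)"] by (simp add: matvec_def mult_ac)
    qed
    finally have "multi_mode_prod (Suc j) n A (cp_tensor d r \<alpha> y) i = cp_tensor d r \<alpha> z' i"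
      by (simp add: cp_tensor_def)
    then show "multi_mode_prod (Suc j) n A (cp_tensor d r \<alpha> y) i =
      cp_tensor d r \<alpha> (\<lambda>l k. if l < Suc j then matvec (n l) (A l) (y l k) else y l k) i"
      by (simp add: z'_def)
  qed
qed




lemma prod_pert:
  fixes z w :: "nat \<Rightarrow> complex"
  assumes "finite I" "\<And>l. l \<in> I \<Longrightarrow> cmod (w l) \<le> M" "\<And>l. l \<in> I \<Longrightarrow> cmod (z l - w l) \<le> c"
    "0 \<le> M" "0 \<le> c"
  shows "cmod (prod z I - prod w I) \<le> real (card I) * c * (M + c) ^ (card I - 1)"
  using assms
proof (induction I rule: finite_induct)
  case empty
  then show ?case by simp
next
  case (insert a F)
  let ?n = "card F"
  have IH: "cmod (prod z F - prod w F) \<le> real ?n * c * (M + c) ^ (?n - 1)"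
    using insert by auto
  have wa: "cmod (w a) \<le> M" and zwa: "cmod (z a - w a) \<le> c" using insert by auto
  have za: "cmod (z a) \<le> M + c"
    using norm_triangle_ineq[of "z a - w a" "w a"] wa zwa by simp
  have pw: "cmod (prod w F) \<le> M ^ ?n"
  proof -
    have "cmod (prod w F) = (\<Prod>l\<in>F. cmod (w l))" by (simp add: prod_norm)
    also have "\<dots> \<le> (\<Prod>l\<in>F. M)" using insert.prems(1) by (intro prod_mono) auto
    finally show ?thesis by simp
  qed
  have eq: "prod z (insert a F) - prod w (insert a F) = (prod z F - prod w F) * z a + prod w F * (z a - w a)"
    using insert.hyps by (simp add: algebra_simps)
  have "cmod (prod z (insert a F) - prod w (insert a F)) \<le> cmod (prod z F - prod w F) * cmod (z a) + cmod (prod w F) * cmod (z a - w a)"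
    unfolding eq by (metis norm_mult norm_triangle_ineq)
  also have "\<dots> \<le> (real ?n * c * (M + c) ^ (?n - 1)) * (M + c) + M ^ ?n * c"
    apply (intro add_mono mult_mono IH za pw zwa)
    using insert.prems by auto
  also have "\<dots> \<le> real ?n * c * (M + c) ^ ?n + (M + c) ^ ?n * c"
  proof -
    have "(M + c) ^ (?n - 1) * (M + c) = (M + c) ^ ?n" if "?n > 0"
      using that by (metis Suc_diff_1 power_Suc2)
    then have "(real ?n * c * (M + c) ^ (?n - 1)) * (M + c) = real ?n * c * (M + c) ^ ?n"
      by (cases "?n = 0") auto
    moreover have "M ^ ?n * c \<le> (M + c) ^ ?n * c"
      using insert.prems by (intro mult_right_mono power_mono) auto
    ultimately show ?thesis by linarith
  qed
  also have "\<dots> = real (card (insert a F)) * c * (M + c) ^ (card (insert a F) - 1)"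
    using insert.hyps by (simp add: algebra_simps)
  finally show ?case .
qed




lemma vnorm2_lin:
  "complex_of_real (vnorm2 N (\<lambda>i. u i + t * v i)) =
     vnorm2 N u + t * cnj t * vnorm2 N v + cnj t * vinner N u v + t * cnj (vinner N u v)"
  unfolding vnorm2_def vinner_def of_real_sum complex_norm_square
  by (simp add: sum.distrib sum_distrib_left cnj_sum algebra_simps)

lemma vnorm2_nonneg: "0 \<le> vnorm2 N u"
  unfolding vnorm2_def by (simp add: sum_nonneg)

lemma matvec_lin: "matvec n A (\<lambda>i. u i + t * v i) = (\<lambda>l. matvec n A u l + t * matvec n A v l)"
  unfolding matvec_def by (simp add: sum.distrib sum_distrib_left algebra_simps)

lemma polar:
  fixes u v :: "nat \<Rightarrow> complex"
  shows "4 * vinner N u v = complex_of_real (vnorm2 N (\<lambda>i. u i + v i)) - complex_of_real (vnorm2 N (\<lambda>i. u i - v i))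
     + \<i> * complex_of_real (vnorm2 N (\<lambda>i. u i + \<i> * v i)) - \<i> * complex_of_real (vnorm2 N (\<lambda>i. u i - \<i> * v i))"
    and "complex_of_real (vnorm2 N (\<lambda>i. u i + v i)) + complex_of_real (vnorm2 N (\<lambda>i. u i - v i))
     + complex_of_real (vnorm2 N (\<lambda>i. u i + \<i> * v i)) + complex_of_real (vnorm2 N (\<lambda>i. u i - \<i> * v i))
     = 4 * (vnorm2 N u + vnorm2 N v)"
proof -
  have e1: "(\<lambda>i. u i + v i) = (\<lambda>i. u i + 1 * v i)" by simp
  have e2: "(\<lambda>i. u i - v i) = (\<lambda>i. u i + (-1) * v i)" by simp
  have e4: "(\<lambda>i. u i - \<i> * v i) = (\<lambda>i. u i + (-\<i>) * v i)" by simp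
  show "4 * vinner N u v = complex_of_real (vnorm2 N (\<lambda>i. u i + v i)) - complex_of_real (vnorm2 N (\<lambda>i. u i - v i))
     + \<i> * complex_of_real (vnorm2 N (\<lambda>i. u i + \<i> * v i)) - \<i> * complex_of_real (vnorm2 N (\<lambda>i. u i - \<i> * v i))"
    unfolding e1 e2 e4 vnorm2_lin by (simp add: algebra_simps)
  show "complex_of_real (vnorm2 N (\<lambda>i. u i + v i)) + complex_of_real (vnorm2 N (\<lambda>i. u i - v i))
     + complex_of_real (vnorm2 N (\<lambda>i. u i + \<i> * v i)) + complex_of_real (vnorm2 N (\<lambda>i. u i - \<i> * v i))
     = 4 * (vnorm2 N u + vnorm2 N v)"
    unfolding e1 e2 e4 vnorm2_lin by (simp add: algebra_simps)
qed

lemma tri4: "cmod (a - b + c - d) \<le> cmod a + cmod b + cmod c + cmod d"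
  using norm_triangle_ineq4[of "a-b+c" d] norm_triangle_ineq[of "a-b" c] norm_triangle_ineq4[of a b] by linarith

lemma jl_inner:
  fixes u v :: "nat \<Rightarrow> complex" and A :: "nat \<Rightarrow> nat \<Rightarrow> complex"
  assumes u: "vnorm2 n u = 1" and v: "vnorm2 n v = 1"
    and J: "\<And>x. x \<in> {\<lambda>i. u i - v i, \<lambda>i. u i + v i, \<lambda>i. u i - \<i> * v i, \<lambda>i. u i + \<i> * v i} \<Longrightarrow>
       \<exists>ex. -\<delta> < ex \<and> ex < \<delta> \<and> vnorm2 m (matvec n A x) = (1 + ex) * vnorm2 n x"
  shows "cmod (vinner m (matvec n A u) (matvec n A v) - vinner n u v) \<le> 2 * \<delta>"
proof -
  obtain e1 where E1: "-\<delta> < e1 \<and> e1 < \<delta>" "vnorm2 m (matvec n A (\<lambda>i. u i + v i)) = (1 + e1) * vnorm2 n (\<lambda>i. u i + v i)"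
    using J[of "\<lambda>i. u i + v i"] by blast
  obtain e2 where E2: "-\<delta> < e2 \<and> e2 < \<delta>" "vnorm2 m (matvec n A (\<lambda>i. u i - v i)) = (1 + e2) * vnorm2 n (\<lambda>i. u i - v i)"
    using J[of "\<lambda>i. u i - v i"] by blast
  obtain e3 where E3: "-\<delta> < e3 \<and> e3 < \<delta>" "vnorm2 m (matvec n A (\<lambda>i. u i + \<i> * v i)) = (1 + e3) * vnorm2 n (\<lambda>i. u i + \<i> * v i)"
    using J[of "\<lambda>i. u i + \<i> * v i"] by blast
  obtain e4 where E4: "-\<delta> < e4 \<and> e4 < \<delta>" "vnorm2 m (matvec n A (\<lambda>i. u i - \<i> * v i)) = (1 + e4) * vnorm2 n (\<lambda>i. u i - \<i> * v i)"
    using J[of "\<lambda>i. u i - \<i> * v i"] by blast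
  define N1 where "N1 = vnorm2 n (\<lambda>i. u i + v i)"
  define N2 where "N2 = vnorm2 n (\<lambda>i. u i - v i)"
  define N3 where "N3 = vnorm2 n (\<lambda>i. u i + \<i> * v i)"
  define N4 where "N4 = vnorm2 n (\<lambda>i. u i - \<i> * v i)"
  have Ns: "N1 + N2 + N3 + N4 = 8"
  proof -
    have "complex_of_real (N1 + N2 + N3 + N4) = 8"
      using polar(2)[of n u v] u v unfolding N1_def N2_def N3_def N4_def by simp
    then show ?thesis by (metis of_real_eq_iff of_real_numeral)
  qed
  have mv1: "matvec n A (\<lambda>i. u i + v i) = (\<lambda>l. matvec n A u l + matvec n A v l)"
    using matvec_lin[of n A u 1 v] by simp
  have mv2: "matvec n A (\<lambda>i. u i - v i) = (\<lambda>l. matvec n A u l - matvec n A v l)"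
    using matvec_lin[of n A u "-1" v] by simp
  have mv3: "matvec n A (\<lambda>i. u i + \<i> * v i) = (\<lambda>l. matvec n A u l + \<i> * matvec n A v l)"
    using matvec_lin[of n A u "\<i>" v] by simp
  have mv4: "matvec n A (\<lambda>i. u i - \<i> * v i) = (\<lambda>l. matvec n A u l - \<i> * matvec n A v l)"
    using matvec_lin[of n A u "-\<i>" v] by simp
  have "4 * (vinner m (matvec n A u) (matvec n A v) - vinner n u v) =
      complex_of_real (e1 * N1) - complex_of_real (e2 * N2) + \<i> * complex_of_real (e3 * N3) - \<i> * complex_of_real (e4 * N4)"
    unfolding right_diff_distrib polar(1)[of m] polar(1)[of n]
    using E1(2) E2(2) E3(2) E4(2) unfolding mv1 mv2 mv3 mv4 N1_def N2_def N3_def N4_def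
    by (simp add: algebra_simps)
  then have "4 * cmod (vinner m (matvec n A u) (matvec n A v) - vinner n u v) =
      cmod (complex_of_real (e1 * N1) - complex_of_real (e2 * N2) + \<i> * complex_of_real (e3 * N3) - \<i> * complex_of_real (e4 * N4))"
    by (metis norm_mult norm_numeral)
  also have "\<dots> \<le> \<bar>e1 * N1\<bar> + \<bar>e2 * N2\<bar> + \<bar>e3 * N3\<bar> + \<bar>e4 * N4\<bar>"
    using tri4[of "complex_of_real (e1 * N1)" "complex_of_real (e2 * N2)" "\<i> * complex_of_real (e3 * N3)" "\<i> * complex_of_real (e4 * N4)"]
    by (simp add: norm_mult abs_mult)
  also have "\<dots> \<le> \<delta> * N1 + \<delta> * N2 + \<delta> * N3 + \<delta> * N4"
    using E1(1) E2(1) E3(1) E4(1) unfolding N1_def N2_def N3_def N4_def abs_mult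
    by (intro add_mono) (auto simp: vnorm2_nonneg intro!: mult_right_mono)
  also have "\<dots> = 8 * \<delta>" using Ns by (metis distrib_left mult.commute)
  finally show ?thesis by simp
qed




lemma vinner_self: "vinner N x x = complex_of_real (vnorm2 N x)"
  unfolding vinner_def vnorm2_def of_real_sum complex_norm_square by simp

lemma vinner_cnj: "vinner N x y = cnj (vinner N y x)"
  unfolding vinner_def by (simp add: cnj_sum mult.commute)

lemma amgm: fixes x y :: real shows "x * y \<le> (x^2 + y^2) / 2"
proof -
  have "0 \<le> (x - y)^2" by simp
  then show ?thesis by (simp add: power2_diff)
qed

lemma vinner_bound: "cmod (vinner N x y) \<le> (vnorm2 N x + vnorm2 N y) / 2"
proof -
  have "cmod (vinner N x y) \<le> (\<Sum>i<N. cmod (x i * cnj (y i)))"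
    unfolding vinner_def by (rule norm_sum)
  also have "\<dots> \<le> (\<Sum>i<N. ((cmod (x i))^2 + (cmod (y i))^2) / 2)"
    by (intro sum_mono) (metis amgm norm_mult complex_mod_cnj)
  also have "\<dots> = (vnorm2 N x + vnorm2 N y) / 2"
    unfolding vnorm2_def by (simp add: sum.distrib sum_divide_distrib[symmetric])
  finally show ?thesis .
qed

lemma pow_exp: fixes x :: real assumes "0 \<le> x" "1 \<le> d" shows "(1 + x / real d) ^ (d - 1) \<le> exp x"
proof -
  have "(1 + x / real d) ^ (d - 1) \<le> (1 + x / real d) ^ d"
    using assms by (intro power_increasing) auto
  also have "\<dots> \<le> exp (x / real d) ^ d"
    using assms by (intro power_mono) auto
  also have "\<dots> = exp x"
    using assms by (simp add: exp_of_nat_mult[symmetric])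
  finally show ?thesis .
qed

lemma max_pow: fixes a b :: real assumes "0 \<le> a" "0 \<le> b" shows "max a b ^ k = max (a ^ k) (b ^ k)"
proof (cases "a \<le> b")
  case True
  then show ?thesis using assms power_mono[of a b k] by (simp add: max_def)
next
  case False
  then show ?thesis using assms power_mono[of b a k] by (simp add: max_def)
qed


lemma sq_sum_le: fixes a :: "nat \<Rightarrow> real" shows "(\<Sum>k<r. a k)^2 \<le> real r * (\<Sum>k<r. (a k)^2)"
proof -
  have "(\<Sum>k<r. a k)^2 = (\<Sum>k<r. \<Sum>h<r. a k * a h)"
    by (simp add: power2_eq_square sum_product)
  also have "\<dots> \<le> (\<Sum>k<r. \<Sum>h<r. ((a k)^2 + (a h)^2) / 2)"
    by (intro sum_mono amgm)
  also have "\<dots> = real r * (\<Sum>k<r. (a k)^2)"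
    by (simp add: sum.distrib sum_divide_distrib[symmetric] add_divide_distrib sum_distrib_left sum.swap[of "\<lambda>k h. (a h)^2 / 2"])
  finally show ?thesis .
qed

lemma quad_bound:
  fixes \<alpha> :: "nat \<Rightarrow> complex" and X :: "nat \<Rightarrow> nat \<Rightarrow> complex"
  assumes E1: "0 \<le> E1" and E2: "0 \<le> E2"
    and X: "\<And>k h. k < r \<Longrightarrow> h < r \<Longrightarrow> cmod (X k h) \<le> (if k = h then E1 else E2)"
  shows "cmod (\<Sum>k<r. \<Sum>h<r. \<alpha> k * cnj (\<alpha> h) * X k h) \<le> (E1 + (real r - 1) * E2) * (\<Sum>k<r. (cmod (\<alpha> k))\<^sup>2)"
proof -
  let ?a = "\<lambda>k. cmod (\<alpha> k)"
  let ?S = "\<Sum>k<r. (cmod (\<alpha> k))\<^sup>2"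
  have "cmod (\<Sum>k<r. \<Sum>h<r. \<alpha> k * cnj (\<alpha> h) * X k h) \<le> (\<Sum>k<r. \<Sum>h<r. cmod (\<alpha> k * cnj (\<alpha> h) * X k h))"
    by (rule order_trans[OF norm_sum sum_mono]) (rule norm_sum)
  also have "\<dots> \<le> (\<Sum>k<r. \<Sum>h<r. ?a k * ?a h * (E2 + (if k = h then E1 - E2 else 0)))"
  proof (intro sum_mono)
    fix k h assume kh: "k \<in> {..<r}" "h \<in> {..<r}"
    have "cmod (X k h) \<le> E2 + (if k = h then E1 - E2 else 0)"
      using X[of k h] kh by (cases "k = h") auto
    then show "cmod (\<alpha> k * cnj (\<alpha> h) * X k h) \<le> ?a k * ?a h * (E2 + (if k = h then E1 - E2 else 0))"
      by (simp add: norm_mult mult_left_mono)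
  qed
  also have "\<dots> = E2 * (\<Sum>k<r. ?a k)^2 + (E1 - E2) * ?S"
    by (simp add: algebra_simps sum.distrib sum_subtractf sum_distrib_left power2_eq_square sum_product if_distrib[of "\<lambda>x. _ * x"] cong: if_cong)
  also have "\<dots> \<le> E2 * (real r * ?S) + (E1 - E2) * ?S"
    using sq_sum_le[of ?a r] E2 by (intro add_right_mono mult_left_mono) auto
  also have "\<dots> = (E1 + (real r - 1) * E2) * ?S" by (simp add: algebra_simps)
  finally show ?thesis .
qed


theorem theorem4:
  fixes eps :: real and d r :: nat and n m :: "nat \<Rightarrow> nat"
    and \<alpha> :: "nat \<Rightarrow> complex" and y :: "nat \<Rightarrow> nat \<Rightarrow> nat \<Rightarrow> complex"
    and A :: "nat \<Rightarrow> nat \<Rightarrow> nat \<Rightarrow> complex"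
  assumes eps_pos: "0 < eps" and eps_le: "eps \<le> 3/4"
    and d_pos: "1 \<le> d"
    and std: "\<And>l k. l < d \<Longrightarrow> k < r \<Longrightarrow> vnorm2 (n l) (y l k) = 1"
    and JL: "\<And>j. j < d \<Longrightarrow> JL_embedding (eps / (4 * real d)) (m j) (n j) (A j) (S_prime r y j)"
  shows "\<bar>tnorm2 d n (cp_tensor d r \<alpha> y)
            - tnorm2 d m (multi_mode_prod d n A (cp_tensor d r \<alpha> y))\<bar>
          \<le> eps * (exp 1 + (exp 1)\<^sup>2 * sqrt (real r * (real r - 1))
                     * max (eps ^ (d - 1)) (coherence d n r y ^ (d - 1)))
              * (\<Sum>k<r. (cmod (\<alpha> k))\<^sup>2)
       \<and> eps * (exp 1 + (exp 1)\<^sup>2 * sqrt (real r * (real r - 1))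
                     * max (eps ^ (d - 1)) (coherence d n r y ^ (d - 1)))
              * (\<Sum>k<r. (cmod (\<alpha> k))\<^sup>2)
          \<le> eps * (exp 1)\<^sup>2 * (real r + 1) * (\<Sum>k<r. (cmod (\<alpha> k))\<^sup>2)
       \<and> (coherence d n r y = 0 \<longrightarrow>
            \<bar>tnorm2 d n (cp_tensor d r \<alpha> y)
              - tnorm2 d m (multi_mode_prod d n A (cp_tensor d r \<alpha> y))\<bar>
            \<le> (eps + exp 1 * sqrt (real r * (real r - 1)) * eps ^ d) * exp 1
                 * (\<Sum>k<r. (cmod (\<alpha> k))\<^sup>2))"
proof -
  define \<delta> where "\<delta> = eps / (4 * real d)"
  define c where "c = eps / (2 * real d)"
  define \<mu> where "\<mu> = coherence d n r y"
  define a where "a = (\<lambda>l k h. vinner (m l) (matvec (n l) (A l) (y l k)) (matvec (n l) (A l) (y l h)))"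
  define b where "b = (\<lambda>l k h. vinner (n l) (y l k) (y l h))"
  define S where "S = (\<Sum>k<r. (cmod (\<alpha> k))\<^sup>2)"
  define Dif where "Dif = \<bar>tnorm2 d n (cp_tensor d r \<alpha> y) - tnorm2 d m (multi_mode_prod d n A (cp_tensor d r \<alpha> y))\<bar>"
  have dpos: "0 < real d" using d_pos by simp
  have c2: "2 * \<delta> = c" unfolding \<delta>_def c_def by (simp add: field_simps)
  have dpos': "0 \<le> \<delta>" unfolding \<delta>_def using eps_pos dpos by simp
  have cpos: "0 \<le> c" using c2 dpos' by simp
  have S0: "0 \<le> S" unfolding S_def by (simp add: sum_nonneg)
  have dc: "real d * c = eps / 2" unfolding c_def using dpos by (simp add: field_simps)
  have c_le: "c \<le> eps"
  proof -
    have "eps / (2 * real d) \<le> eps / 1" using eps_pos d_pos by (intro divide_left_mono) auto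
    then show ?thesis unfolding c_def by simp
  qed
  have e1: "1 \<le> exp (1::real)" by simp
  have bdiag: "b l k k = 1" if "l < d" "k < r" for l k
    unfolding b_def vinner_self using std[OF that] by simp
  have bone: "cmod (b l k h) \<le> 1" if "l < d" "k < r" "h < r" for l k h
    unfolding b_def using vinner_bound[of "n l" "y l k" "y l h"] std that by simp
  define Cs where "Cs = {cmod (vinner (n l) (y l k) (y l h)) | l k h. l < d \<and> k < r \<and> h < r \<and> k \<noteq> h}"
  have finCs: "finite Cs"
  proof (rule finite_subset)
    show "Cs \<subseteq> (\<lambda>(l, k, h). cmod (vinner (n l) (y l k) (y l h))) ` ({..<d} \<times> {..<r} \<times> {..<r})"
      unfolding Cs_def
      apply clarify
      subgoal for x l k h by (rule image_eqI[of _ _ "(l, k, h)"]) auto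
      done
  qed auto
  have mu_def': "\<mu> = Max (insert 0 Cs)" unfolding \<mu>_def coherence_def Cs_def by simp
  have mu0: "0 \<le> \<mu>" unfolding mu_def' using finCs by simp
  have mu1: "\<mu> \<le> 1" unfolding mu_def' using finCs
    by (auto simp: Cs_def intro!: bone[unfolded b_def])
  have bmu: "cmod (b l k h) \<le> \<mu>" if "l < d" "k < r" "h < r" "k \<noteq> h" for l k h
  proof -
    have "cmod (b l k h) \<in> Cs" unfolding Cs_def b_def using that by blast
    then show ?thesis unfolding mu_def' using finCs by simp
  qed
  have ab0: "cmod (a l k h - b l k h) \<le> c" if l: "l < d" and k: "k < r" and h: "h < r" and hk: "h < k" for l k h
  proof -
    have J: "\<And>x. x \<in> S_prime r y l \<Longrightarrow> \<exists>ex. -\<delta> < ex \<and> ex < \<delta> \<and> vnorm2 (m l) (matvec (n l) (A l) x) = (1 + ex) * vnorm2 (n l) x"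
      using JL[OF l] unfolding JL_embedding_def \<delta>_def by blast
    have sub: "{\<lambda>i. y l k i - y l h i, \<lambda>i. y l k i + y l h i, \<lambda>i. y l k i - \<i> * y l h i, \<lambda>i. y l k i + \<i> * y l h i} \<subseteq> S_prime r y l"
      unfolding S_prime_def using k hk by blast
    have "cmod (a l k h - b l k h) \<le> 2 * \<delta>"
      unfolding a_def b_def
      by (rule jl_inner[OF std[OF l k] std[OF l h]]) (use J sub in blast)
    then show ?thesis using c2 by simp
  qed
  have ab: "cmod (a l k h - b l k h) \<le> c" if l: "l < d" and k: "k < r" and h: "h < r" for l k h
  proof -
    consider "h < k" | "k < h" | "k = h" by linarith
    then show ?thesis
    proof cases
      case 1 then show ?thesis using ab0 l k h by blast
    next
      case 2
      have "a l k h - b l k h = cnj (a l h k - b l h k)"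
        unfolding a_def b_def by (subst (1 2) vinner_cnj) simp
      then show ?thesis using ab0[OF l h k 2] by (metis complex_mod_cnj)
    next
      case 3
      have "y l k \<in> S_prime r y l" unfolding S_prime_def using k by blast
      then obtain ex where ex: "-\<delta> < ex" "ex < \<delta>" "vnorm2 (m l) (matvec (n l) (A l) (y l k)) = (1 + ex) * vnorm2 (n l) (y l k)"
        using JL[OF l] unfolding JL_embedding_def \<delta>_def by blast
      have "a l k h - b l k h = complex_of_real ex"
        using ex(3) std[OF l k] 3 unfolding a_def b_def by (simp add: vinner_self)
      then have "cmod (a l k h - b l k h) = \<bar>ex\<bar>" by simp
      also have "\<dots> \<le> c" using ex c2 dpos' by linarith
      finally show ?thesis .
    qed
  qed
  have T1: "complex_of_real (tnorm2 d n (cp_tensor d r \<alpha> y)) = (\<Sum>k<r. \<Sum>h<r. \<alpha> k * cnj (\<alpha> h) * (\<Prod>l<d. b l k h))"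
    unfolding tnorm2_cp b_def ..
  have T2: "complex_of_real (tnorm2 d m (multi_mode_prod d n A (cp_tensor d r \<alpha> y))) = (\<Sum>k<r. \<Sum>h<r. \<alpha> k * cnj (\<alpha> h) * (\<Prod>l<d. a l k h))"
    unfolding mmp[OF order_refl] tnorm2_cp a_def
    by (intro sum.cong refl arg_cong2[where f="(*)"] prod.cong) auto
  have Dif_eq: "Dif = cmod (\<Sum>k<r. \<Sum>h<r. \<alpha> k * cnj (\<alpha> h) * ((\<Prod>l<d. b l k h) - (\<Prod>l<d. a l k h)))"
  proof -
    have "Dif = cmod (complex_of_real (tnorm2 d n (cp_tensor d r \<alpha> y)) - complex_of_real (tnorm2 d m (multi_mode_prod d n A (cp_tensor d r \<alpha> y))))"
      unfolding Dif_def by (metis norm_of_real of_real_diff)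
    also have "\<dots> = cmod (\<Sum>k<r. \<Sum>h<r. \<alpha> k * cnj (\<alpha> h) * ((\<Prod>l<d. b l k h) - (\<Prod>l<d. a l k h)))"
      unfolding T1 T2 by (simp add: sum_subtractf[symmetric] right_diff_distrib)
    finally show ?thesis .
  qed
  have pert: "cmod ((\<Prod>l<d. b l k h) - (\<Prod>l<d. a l k h)) \<le> real d * c * (M + c) ^ (d - 1)"
    if "k < r" "h < r" "\<And>l. l < d \<Longrightarrow> cmod (b l k h) \<le> M" "0 \<le> M" for k h M
  proof -
    have "cmod ((\<Prod>l<d. a l k h) - (\<Prod>l<d. b l k h)) \<le> real (card {..<d}) * c * (M + c) ^ (card {..<d} - 1)"
      by (rule prod_pert) (use that ab cpos in auto)
    then show ?thesis by (simp add: norm_minus_commute)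
  qed
  have gen: "Dif \<le> (E1 + (real r - 1) * E2) * S"
    if "0 \<le> E1" "0 \<le> E2" "\<And>k h. k < r \<Longrightarrow> h < r \<Longrightarrow> cmod ((\<Prod>l<d. b l k h) - (\<Prod>l<d. a l k h)) \<le> (if k = h then E1 else E2)" for E1 E2
    unfolding Dif_eq S_def by (rule quad_bound) (use that in auto)
  define E1 where "E1 = real d * c * (1 + c) ^ (d - 1)"
  have E1_0: "0 \<le> E1" unfolding E1_def using cpos by simp
  have E1_le: "E1 \<le> eps * exp 1"
  proof -
    have "(1 + c) ^ (d - 1) \<le> exp (eps / 2)"
      using pow_exp[of "eps/2" d] eps_pos d_pos unfolding c_def by simp
    also have "\<dots> \<le> exp 1" using eps_le by simp
    finally have "E1 \<le> eps / 2 * exp 1" unfolding E1_def dc using eps_pos by (simp add: mult_left_mono)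
    moreover have "eps / 2 * exp 1 \<le> eps * exp 1" using eps_pos by (intro mult_right_mono) auto
    ultimately show ?thesis by linarith
  qed
  have diagb: "cmod ((\<Prod>l<d. b l k k) - (\<Prod>l<d. a l k k)) \<le> E1" if "k < r" for k
    unfolding E1_def by (rule pert) (use that bone in auto)
  define Mx where "Mx = max (eps ^ (d - 1)) (\<mu> ^ (d - 1))"
  have Mx0: "0 \<le> Mx" unfolding Mx_def using eps_pos by (simp add: le_max_iff_disj)
  have Mx1: "Mx \<le> 1" unfolding Mx_def using eps_pos eps_le mu0 mu1 by (simp add: power_le_one)
  have sq1: "real r - 1 \<le> sqrt (real r * (real r - 1))" if "1 \<le> r"
    by (rule real_le_rsqrt) (use that in \<open>simp add: power2_eq_square algebra_simps\<close>)
  have sq2: "sqrt (real r * (real r - 1)) \<le> real r"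
  proof (cases "r = 0")
    case False
    then show ?thesis by (intro real_le_lsqrt) (auto simp: power2_eq_square algebra_simps)
  qed simp
  define M where "M = max eps \<mu>"
  define E2 where "E2 = real d * c * (M + c) ^ (d - 1)"
  have M0: "0 \<le> M" unfolding M_def using eps_pos by simp
  have E2_0: "0 \<le> E2" unfolding E2_def using cpos M0 by simp
  have E2_le: "E2 \<le> eps * (exp 1)\<^sup>2 * Mx"
  proof -
    have "M + c \<le> M * (1 + (1/2) / real d)"
    proof -
      have "c \<le> M / (2 * real d)" unfolding c_def M_def using dpos
        by (intro divide_right_mono) auto
      then show ?thesis using dpos by (simp add: field_simps)
    qed
    then have "(M + c) ^ (d - 1) \<le> (M * (1 + (1/2) / real d)) ^ (d - 1)"
      using M0 cpos by (intro power_mono) auto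
    also have "\<dots> = M ^ (d - 1) * (1 + (1/2) / real d) ^ (d - 1)" by (simp add: power_mult_distrib)
    also have "\<dots> \<le> M ^ (d - 1) * exp (1/2)"
      using pow_exp[of "1/2" d] d_pos M0 by (intro mult_left_mono) auto
    also have "\<dots> \<le> M ^ (d - 1) * exp 1" using M0 by (intro mult_left_mono) auto
    also have "M ^ (d - 1) = Mx" unfolding M_def Mx_def using eps_pos mu0 by (simp add: max_pow)
    finally have "E2 \<le> eps / 2 * (Mx * exp 1)" unfolding E2_def dc using eps_pos by (simp add: mult_left_mono)
    also have "\<dots> \<le> eps * (exp 1)\<^sup>2 * Mx"
    proof -
      have "exp (1::real) \<le> (exp 1)\<^sup>2" using e1 by (simp add: power2_eq_square)
      then have "Mx * exp 1 \<le> Mx * (exp 1)\<^sup>2" using Mx0 by (intro mult_left_mono)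
      then have "eps / 2 * (Mx * exp 1) \<le> eps * (Mx * (exp 1)\<^sup>2)"
        using eps_pos Mx0 by (rule_tac mult_mono) auto
      then show ?thesis by (simp add: ac_simps)
    qed
    finally show ?thesis .
  qed
  have offb: "cmod ((\<Prod>l<d. b l k h) - (\<Prod>l<d. a l k h)) \<le> E2" if "k < r" "h < r" "k \<noteq> h" for k h
  proof (rule pert[of k h M, unfolded E2_def[symmetric]])
    fix l assume "l < d"
    then have "cmod (b l k h) \<le> \<mu>" using bmu that by blast
    then show "cmod (b l k h) \<le> M" unfolding M_def by linarith
  qed (use that M0 in auto)
  have C1: "Dif \<le> (E1 + (real r - 1) * E2) * S"
    by (rule gen[OF E1_0 E2_0]) (use diagb offb in auto)
  have C1': "E1 + (real r - 1) * E2 \<le> eps * (exp 1 + (exp 1)\<^sup>2 * sqrt (real r * (real r - 1)) * Mx)"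
  proof -
    have "(real r - 1) * E2 \<le> sqrt (real r * (real r - 1)) * (eps * (exp 1)\<^sup>2 * Mx)"
    proof (cases "r = 0")
      case True
      then show ?thesis using E2_0 by simp
    next
      case False
      then show ?thesis using sq1 E2_le E2_0 by (intro mult_mono) auto
    qed
    then show ?thesis using E1_le by (simp add: algebra_simps)
  qed
  have claim1: "Dif \<le> eps * (exp 1 + (exp 1)\<^sup>2 * sqrt (real r * (real r - 1)) * Mx) * S"
    using C1 C1' S0 by (meson mult_right_mono order_trans)
  have claim2: "eps * (exp 1 + (exp 1)\<^sup>2 * sqrt (real r * (real r - 1)) * Mx) * S \<le> eps * (exp 1)\<^sup>2 * (real r + 1) * S"
  proof -
    have "sqrt (real r * (real r - 1)) * Mx \<le> real r * 1"
      using sq2 Mx1 Mx0 by (intro mult_mono) auto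
    then have "(exp 1)\<^sup>2 * (sqrt (real r * (real r - 1)) * Mx) \<le> (exp 1)\<^sup>2 * real r"
      by (intro mult_left_mono) auto
    moreover have "exp (1::real) \<le> (exp 1)\<^sup>2" using e1 by (simp add: power2_eq_square)
    moreover have "(exp 1)\<^sup>2 * (real r + 1) = (exp 1)\<^sup>2 * real r + (exp (1::real))\<^sup>2"
      by (simp add: distrib_left)
    ultimately have "exp 1 + (exp 1)\<^sup>2 * sqrt (real r * (real r - 1)) * Mx \<le> (exp 1)\<^sup>2 * (real r + 1)"
      by (simp only: mult.assoc)
    then have "eps * (exp 1 + (exp 1)\<^sup>2 * sqrt (real r * (real r - 1)) * Mx) * S \<le> eps * ((exp 1)\<^sup>2 * (real r + 1)) * S"
      using eps_pos S0 by (intro mult_right_mono mult_left_mono) auto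
    then show ?thesis by (simp only: mult.assoc)
  qed
  have claim3: "Dif \<le> (eps + exp 1 * sqrt (real r * (real r - 1)) * eps ^ d) * exp 1 * S" if mz: "\<mu> = 0"
  proof -
    define E2' where "E2' = real d * c * (0 + c) ^ (d - 1)"
    have E2'_0: "0 \<le> E2'" unfolding E2'_def using cpos by simp
    have E2'_le: "E2' \<le> eps ^ d"
    proof -
      have "E2' = eps / 2 * c ^ (d - 1)" unfolding E2'_def dc by simp
      also have "\<dots> \<le> eps / 2 * eps ^ (d - 1)" using cpos c_le eps_pos by (intro mult_left_mono power_mono) auto
      also have "\<dots> \<le> eps * eps ^ (d - 1)" using eps_pos by (intro mult_right_mono) auto
      also have "\<dots> = eps ^ d" using d_pos by (metis Suc_diff_1 less_le_trans zero_less_one power_Suc)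
      finally show ?thesis .
    qed
    have offb': "cmod ((\<Prod>l<d. b l k h) - (\<Prod>l<d. a l k h)) \<le> E2'" if "k < r" "h < r" "k \<noteq> h" for k h
      unfolding E2'_def by (rule pert) (use that bmu mz in auto)
    have "Dif \<le> (E1 + (real r - 1) * E2') * S"
      by (rule gen[OF E1_0 E2'_0]) (use diagb offb' in auto)
    moreover have "E1 + (real r - 1) * E2' \<le> (eps + exp 1 * sqrt (real r * (real r - 1)) * eps ^ d) * exp 1"
    proof -
      have "(real r - 1) * E2' \<le> sqrt (real r * (real r - 1)) * (eps ^ d * (exp 1 * exp 1))"
      proof (cases "r = 0")
        case True
        then show ?thesis using E2'_0 by simp
      next
        case False
        have "eps ^ d \<le> eps ^ d * (exp 1 * exp 1)" using eps_pos e1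
          by (simp add: mult_le_cancel_left1 one_le_exp_iff) (metis e1 mult_mono one_le_numeral order_trans mult_1 zero_le_one)
        then show ?thesis using False sq1 E2'_le E2'_0 by (intro mult_mono) auto
      qed
      then show ?thesis using E1_le by (simp add: algebra_simps)
    qed
    ultimately show ?thesis using S0 by (meson mult_right_mono order_trans)
  qed
  show ?thesis
    using claim1 claim2 claim3 unfolding Dif_def S_def Mx_def \<mu>_def by blast
qed

end
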